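(* Let $\beta,\delta\in(0,1)$, $K>0$, $d_1,d_2>0$, and let $\eta_1,\eta_2\ge0$ be constants. Consider $$\frac{df}{dt}=\tfrac12 fm\beta L-\delta f-\eta_1\frac{f}{f+d_1},\qquad \frac{dm}{dt}=\tfrac12 fm\beta L-\delta m-\eta_2\frac{m}{m+d_2},\qquad L=1-\frac{f+m}{K}.$$ If $\beta K<2\delta+\frac{\eta_1}{K+d_1}+\frac{\eta_2}{K+d_2}$, then the trivial equilibrium $(0,0)$ is globally asymptotically stable.
   Context: $f,m$ are female and male densities, with populations considered in the region $0\le f,m$, $f+m\le K$. The model uses saturating harvesting of both females and males. *)

theory Defs
  imports "HOL-Analysis.Analysis"
begin

definition harvest_field ::
  "real \<Rightarrow> real \<Rightarrow> real \<Rightarrow> real \<Rightarrow> real \<Rightarrow> real \<Rightarrow> real \<Rightarrow> real \<times> real \<Rightarrow> real \<times> real" where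
  "harvest_field \<beta> \<delta> K \<eta>\<^sub>1 \<eta>\<^sub>2 d\<^sub>1 d\<^sub>2 = (\<lambda>(f, m).
     (let L = 1 - (f + m) / K in
      (1/2 * f * m * \<beta> * L - \<delta> * f - \<eta>\<^sub>1 * (f / (f + d\<^sub>1)),
       1/2 * f * m * \<beta> * L - \<delta> * m - \<eta>\<^sub>2 * (m / (m + d\<^sub>2)))))"

definition region :: "real \<Rightarrow> (real \<times> real) set" where
  "region K = {(f, m). 0 \<le> f \<and> 0 \<le> m \<and> f + m \<le> K}"

definition is_solution :: "(real \<times> real \<Rightarrow> real \<times> real) \<Rightarrow> (real \<Rightarrow> real \<times> real) \<Rightarrow> bool" where
  "is_solution F x \<longleftrightarrow>
     (\<forall>t\<ge>0. (x has_vector_derivative F (x t)) (at t within {0..}))"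

definition globally_asymptotically_stable ::
  "(real \<times> real \<Rightarrow> real \<times> real) \<Rightarrow> (real \<times> real) set \<Rightarrow> real \<times> real \<Rightarrow> bool" where
  "globally_asymptotically_stable F D p \<longleftrightarrow>
     F p = 0 \<and>
     (\<forall>\<epsilon>>0. \<exists>\<delta>>0. \<forall>x. is_solution F x \<and> x 0 \<in> D \<and> dist (x 0) p < \<delta> \<longrightarrow>
        (\<forall>t\<ge>0. dist (x t) p < \<epsilon>)) \<and>
     (\<forall>x. is_solution F x \<and> x 0 \<in> D \<longrightarrow> (x \<longlongrightarrow> p) at_top)"

end

theory Submission
  imports Defs
begin

lemma vd_fst: "(x has_vector_derivative v) F \<Longrightarrow> ((\<lambda>t. fst (x t)) has_real_derivative fst v) F"
  unfolding has_vector_derivative_def has_field_derivative_def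
  by (drule has_derivative_fst) (simp add: mult_commute_abs)

lemma vd_snd: "(x has_vector_derivative v) F \<Longrightarrow> ((\<lambda>t. snd (x t)) has_real_derivative snd v) F"
  unfolding has_vector_derivative_def has_field_derivative_def
  by (drule has_derivative_snd) (simp add: mult_commute_abs)

lemma last_time:
  fixes u :: "real \<Rightarrow> real"
  assumes ab: "a \<le> b" and c: "continuous_on {a..b} u" and ua: "u a \<le> c"
  shows "\<exists>s\<in>{a..b}. u s \<le> c \<and> (\<forall>t. s < t \<and> t \<le> b \<longrightarrow> u t > c) \<and> (u b > c \<longrightarrow> u s = c)"
proof -
  define S where "S = {a..b} \<inter> u -` {..c}"
  have cl: "closed S" unfolding S_def by (rule continuous_closed_preimage[OF c]) auto
  have ne: "S \<noteq> {}" using ab ua unfolding S_def by auto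
  have bd: "bdd_above S" unfolding S_def by (rule bdd_aboveI[of _ b]) auto
  define s where "s = Sup S"
  have sS: "s \<in> S" unfolding s_def using closed_contains_Sup[OF ne bd cl] .
  have ub: "t \<le> s" if "t \<in> S" for t unfolding s_def using cSup_upper[OF that bd] .
  have A: "\<forall>t. s < t \<and> t \<le> b \<longrightarrow> u t > c"
  proof (intro allI impI)
    fix t assume t: "s < t \<and> t \<le> b"
    have "a \<le> t" using sS t unfolding S_def by auto
    show "u t > c"
    proof (rule ccontr)
      assume "\<not> u t > c"
      then have "t \<in> S" using t \<open>a \<le> t\<close> unfolding S_def by auto
      then show False using ub t by fastforce
    qed
  qed
  have B: "u s = c" if ub': "u b > c"
  proof -
    have sb: "s \<le> b" "a \<le> s" "u s \<le> c" using sS unfolding S_def by auto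
    have "continuous_on {s..b} u" using c sb by (auto intro: continuous_on_subset)
    then obtain z where z: "s \<le> z" "z \<le> b" "u z = c"
      using IVT'[of u s c b] sb ub' by auto
    then have "z \<in> S" using sb unfolding S_def by auto
    then have "z = s" using ub z by fastforce
    then show ?thesis using z by simp
  qed
  show ?thesis using sS A B unfolding S_def by auto
qed

lemma cont_from_deriv:
  fixes u :: "real \<Rightarrow> real"
  assumes d: "\<forall>t\<ge>0. (u has_real_derivative D t) (at t within {0..})"
  shows "continuous_on {0..} u"
  using d by (intro continuous_on_eq_continuous_within[THEN iffD2] ballI DERIV_continuous) auto

lemma deriv_interior:
  fixes u :: "real \<Rightarrow> real"
  assumes "(u has_real_derivative D) (at t within {0..})" "0 < t"
  shows "(u has_real_derivative D) (at t)"
proof -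
  have "at t within {0..} = at t"
    by (rule at_within_interior) (use assms(2) in auto)
  then show ?thesis using assms(1) by simp
qed

lemma stay_nonneg:
  fixes u g :: "real \<Rightarrow> real"
  assumes d: "\<forall>t\<ge>0. (u has_real_derivative u t * g t) (at t within {0..})"
    and u0: "u 0 \<ge> 0"
    and bd: "\<forall>s\<ge>0. u s = 0 \<longrightarrow> (\<exists>M. eventually (\<lambda>t. g t \<le> M) (at s within {0..}))"
  shows "\<forall>t\<ge>0. u t \<ge> 0"
proof (intro allI impI, rule ccontr)
  fix t1 :: real assume t1: "0 \<le> t1" "\<not> 0 \<le> u t1"
  have cu: "continuous_on {0..} u" using cont_from_deriv[OF d] .
  have cn: "continuous_on {0..t1} (\<lambda>t. - u t)"
    by (intro continuous_intros continuous_on_subset[OF cu]) auto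
  have "- u 0 \<le> 0" using u0 by simp
  from last_time[OF t1(1) cn this] obtain s where s0: "s \<in> {0..t1}"
    "\<forall>t. s < t \<and> t \<le> t1 \<longrightarrow> - u t > 0" "- u t1 > 0 \<longrightarrow> - u s = 0"
    by blast
  have s: "s \<in> {0..t1}" "\<forall>t. s < t \<and> t \<le> t1 \<longrightarrow> - u t > 0" "- u s = 0"
    using s0 t1 by auto
  have st1: "s < t1" using s t1 by (cases "s = t1") auto
  obtain M where "eventually (\<lambda>t. g t \<le> M) (at s within {0..})" using bd s by auto
  then obtain dd where dd: "dd > 0" "\<forall>t\<in>{0..}. t \<noteq> s \<and> dist t s < dd \<longrightarrow> g t \<le> M"
    unfolding eventually_at by blast
  define e where "e = min (dd/2) (t1 - s)"
  have e: "e > 0" "e \<le> t1 - s" "e < dd" using dd st1 by (auto simp: e_def)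
  define w where "w t = (u t)^2 * exp (-2*M*t)" for t
  have "w (s+e) \<le> w s"
  proof (rule DERIV_nonpos_imp_decreasing_open[of s "s+e" w])
    show "s \<le> s + e" using e by simp
    show "continuous_on {s..s+e} w" unfolding w_def
      by (intro continuous_intros continuous_on_subset[OF cu]) (use s in auto)
    fix y assume y: "s < y" "y < s + e"
    have y0: "0 < y" using y s by auto
    have du: "(u has_real_derivative u y * g y) (at y)"
      using deriv_interior d y0 by auto
    have gy: "g y \<le> M" using dd(2) y e y0 by (auto simp: dist_real_def)
    have "(w has_real_derivative (2 * u y * (u y * g y) * exp (-2*M*y) + (u y)^2 * (exp (-2*M*y) * (-2*M)))) (at y)"
      unfolding w_def
      by (rule derivative_eq_intros du refl | simp)+
    moreover have "2 * u y * (u y * g y) * exp (-2*M*y) + (u y)^2 * (exp (-2*M*y) * (-2*M))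
        = 2 * (u y)^2 * exp (-2*M*y) * (g y - M)"
      by (simp add: algebra_simps power2_eq_square)
    moreover have "2 * (u y)^2 * exp (-2*M*y) * (g y - M) \<le> 0"
      using gy by (intro mult_nonneg_nonpos) auto
    ultimately show "\<exists>z. (w has_real_derivative z) (at y) \<and> z \<le> 0" by auto
  qed
  moreover have "w s = 0" using s by (simp add: w_def)
  moreover have "u (s+e) < 0" using s(2) e by auto
  then have "w (s+e) > 0" by (simp add: w_def)
  ultimately show False by simp
qed

lemma quarter: fixes m K :: real assumes "0 < K" "0 \<le> m"
  shows "m * (1 - m / K) \<le> K / 4"
proof -
  have "m * (1 - m / K) = K/4 - (K - 2*m)^2 / (4*K)" using assms by (simp add: field_simps power2_eq_square)
  moreover have "(K - 2*m)^2 / (4*K) \<ge> 0" using assms by simp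
  ultimately show ?thesis by linarith
qed

lemma key_ineq:
  fixes \<beta> \<delta> K d\<^sub>1 d\<^sub>2 \<eta>\<^sub>1 \<eta>\<^sub>2 f m :: real
  assumes "0 < \<beta>" "0 < \<delta>" "0 < K" "0 < d\<^sub>1" "0 < d\<^sub>2"
    and "0 \<le> \<eta>\<^sub>1" "0 \<le> \<eta>\<^sub>2"
    and cond: "\<beta> * K < 2 * \<delta> + \<eta>\<^sub>1 / (K + d\<^sub>1) + \<eta>\<^sub>2 / (K + d\<^sub>2)"
    and f: "0 \<le> f" and m: "0 \<le> m" and fm: "f + m \<le> K"
  shows "(1/2 * f * m * \<beta> * (1 - (f + m) / K) - \<delta> * f - \<eta>\<^sub>1 * (f / (f + d\<^sub>1)))
       + (1/2 * f * m * \<beta> * (1 - (f + m) / K) - \<delta> * m - \<eta>\<^sub>2 * (m / (m + d\<^sub>2)))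
       \<le> -(3/4) * \<delta> * (f + m)"
proof -
  define a where "a = \<eta>\<^sub>1 / (K + d\<^sub>1)"
  define b where "b = \<eta>\<^sub>2 / (K + d\<^sub>2)"
  define L where "L = 1 - (f + m) / K"
  have a0: "a \<ge> 0" "b \<ge> 0" using assms by (auto simp: a_def b_def)
  have h1: "\<eta>\<^sub>1 * (f / (f + d\<^sub>1)) \<ge> a * f"
  proof -
    have "f / (K + d\<^sub>1) \<le> f / (f + d\<^sub>1)"
      using assms by (intro divide_left_mono) (auto intro: mult_pos_pos)
    then have "\<eta>\<^sub>1 * (f / (K + d\<^sub>1)) \<le> \<eta>\<^sub>1 * (f / (f + d\<^sub>1))" using assms by (intro mult_left_mono) auto
    then show ?thesis by (simp add: a_def)
  qed
  have h2: "\<eta>\<^sub>2 * (m / (m + d\<^sub>2)) \<ge> b * m"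
  proof -
    have "m / (K + d\<^sub>2) \<le> m / (m + d\<^sub>2)"
      using assms by (intro divide_left_mono) (auto intro: mult_pos_pos)
    then have "\<eta>\<^sub>2 * (m / (K + d\<^sub>2)) \<le> \<eta>\<^sub>2 * (m / (m + d\<^sub>2))" using assms by (intro mult_left_mono) auto
    then show ?thesis by (simp add: b_def)
  qed
  have L0: "L \<ge> 0" using fm assms by (simp add: L_def field_simps)
  have mL: "m * L \<le> K / 4"
  proof -
    have "m * L \<le> m * (1 - m / K)" unfolding L_def using assms f m
      by (intro mult_left_mono) (auto simp: field_simps)
    then show ?thesis using quarter[OF assms(3) m] by linarith
  qed
  have fL: "f * L \<le> K / 4"
  proof -
    have "f * L \<le> f * (1 - f / K)" unfolding L_def using assms f m
      by (intro mult_left_mono) (auto simp: field_simps)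
    then show ?thesis using quarter[OF assms(3) f] by linarith
  qed
  define p where "p = \<delta> + a"
  define q where "q = \<delta> + b"
  have pq: "p > 0" "q > 0" using a0 assms by (auto simp: p_def q_def)
  have c2: "\<beta> * K < p + q" using cond by (simp add: p_def q_def a_def b_def)
  define P where "P = f * m * L"
  have P1: "P \<le> K * f / 4" using mult_left_mono[OF mL f] by (simp add: P_def algebra_simps)
  have P2: "P \<le> K * m / 4" using mult_left_mono[OF fL m] by (simp add: P_def algebra_simps)
  have "(p + q) * P \<le> K * (p * f + q * m) / 4"
  proof -
    have "p * P \<le> p * (K * f / 4)" using P1 pq by (intro mult_left_mono) auto
    moreover have "q * P \<le> q * (K * m / 4)" using P2 pq by (intro mult_left_mono) auto
    ultimately show ?thesis by (simp add: algebra_simps)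
  qed
  then have "(p + q) * (\<beta> * P) \<le> \<beta> * K * (p * f + q * m) / 4"
  proof -
    assume h: "(p + q) * P \<le> K * (p * f + q * m) / 4"
    have "\<beta> * ((p + q) * P) \<le> \<beta> * (K * (p * f + q * m) / 4)"
      using h assms by (intro mult_left_mono) auto
    then show ?thesis by (simp add: algebra_simps)
  qed
  also have "\<dots> \<le> (p + q) * ((p * f + q * m) / 4)"
    using mult_right_mono[OF less_imp_le[OF c2], of "(p * f + q * m)/4"] pq f m by (simp add: algebra_simps)
  finally have bP: "\<beta> * P \<le> (p * f + q * m) / 4" using pq by (simp add: mult_le_cancel_left_pos)
  have "1/2 * f * m * \<beta> * L + 1/2 * f * m * \<beta> * L = \<beta> * P" by (simp add: P_def)
  then have "(1/2 * f * m * \<beta> * L - \<delta> * f - \<eta>\<^sub>1 * (f / (f + d\<^sub>1)))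
       + (1/2 * f * m * \<beta> * L - \<delta> * m - \<eta>\<^sub>2 * (m / (m + d\<^sub>2)))
       \<le> (p * f + q * m) / 4 - p * f - q * m"
  proof -
    assume e: "1/2 * f * m * \<beta> * L + 1/2 * f * m * \<beta> * L = \<beta> * P"
    have "p * f = \<delta> * f + a * f" "q * m = \<delta> * m + b * m" by (simp_all add: p_def q_def algebra_simps)
    then show ?thesis using e bP h1 h2 by linarith
  qed
  also have "\<dots> \<le> -(3/4) * \<delta> * (f + m)"
  proof -
    have "a * f \<ge> 0" "b * m \<ge> 0" using a0 f m by auto
    moreover have "p * f = \<delta> * f + a * f" "q * m = \<delta> * m + b * m" by (simp_all add: p_def q_def algebra_simps)
    moreover have "-(3/4) * \<delta> * (f + m) = -(3/4) * (\<delta> * f) - (3/4) * (\<delta> * m)" by (simp add: algebra_simps)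
    ultimately show ?thesis by (simp add: field_simps)
  qed
  finally show ?thesis by (simp add: L_def)
qed

lemma big_ineq:
  fixes \<beta> \<delta> K d\<^sub>1 d\<^sub>2 \<eta>\<^sub>1 \<eta>\<^sub>2 f m :: real
  assumes "0 < \<beta>" "0 < \<delta>" "0 < K" "0 < d\<^sub>1" "0 < d\<^sub>2"
    and "0 \<le> \<eta>\<^sub>1" "0 \<le> \<eta>\<^sub>2"
    and f: "0 \<le> f" and m: "0 \<le> m" and fm: "K \<le> f + m"
  shows "(1/2 * f * m * \<beta> * (1 - (f + m) / K) - \<delta> * f - \<eta>\<^sub>1 * (f / (f + d\<^sub>1)))
       + (1/2 * f * m * \<beta> * (1 - (f + m) / K) - \<delta> * m - \<eta>\<^sub>2 * (m / (m + d\<^sub>2)))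
       \<le> - \<delta> * (f + m)"
proof -
  have L: "1 - (f + m) / K \<le> 0" using assms by (simp add: field_simps)
  have "f * m * \<beta> \<ge> 0" using assms by simp
  then have "1/2 * f * m * \<beta> * (1 - (f + m) / K) \<le> 0" using L
    by (simp add: mult_nonneg_nonpos)
  moreover have "\<eta>\<^sub>1 * (f / (f + d\<^sub>1)) \<ge> 0" "\<eta>\<^sub>2 * (m / (m + d\<^sub>2)) \<ge> 0" using assms by auto
  ultimately show ?thesis by (simp add: algebra_simps)
qed

lemma exp_decay:
  fixes c :: real assumes c: "0 < c"
  shows "((\<lambda>t. exp (-c * t)) \<longlongrightarrow> 0) at_top"
proof -
  have "filterlim (\<lambda>t. c * t) at_top at_top"
    by (rule filterlim_tendsto_pos_mult_at_top[OF tendsto_const c filterlim_ident])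
  then have "filterlim (\<lambda>t. -(c*t)) at_bot at_top" by (simp only: filterlim_uminus_at_top)
  from filterlim_compose[OF exp_at_bot this] show ?thesis by simp
qed

lemma sol_bound:
  fixes \<beta> \<delta> K d\<^sub>1 d\<^sub>2 \<eta>\<^sub>1 \<eta>\<^sub>2 :: real and x :: "real \<Rightarrow> real \<times> real"
  assumes pb: "0 < \<beta>" and pd: "0 < \<delta>" and pK: "0 < K" and p1: "0 < d\<^sub>1" and p2: "0 < d\<^sub>2"
    and e1: "0 \<le> \<eta>\<^sub>1" and e2: "0 \<le> \<eta>\<^sub>2"
    and cond: "\<beta> * K < 2 * \<delta> + \<eta>\<^sub>1 / (K + d\<^sub>1) + \<eta>\<^sub>2 / (K + d\<^sub>2)"
    and sol: "is_solution (harvest_field \<beta> \<delta> K \<eta>\<^sub>1 \<eta>\<^sub>2 d\<^sub>1 d\<^sub>2) x"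
    and x0: "x 0 \<in> region K"
  shows "\<forall>t\<ge>0. norm (x t) \<le> (fst (x 0) + snd (x 0)) * exp (-(3/4*\<delta>) * t)"
proof -
  define F where "F = harvest_field \<beta> \<delta> K \<eta>\<^sub>1 \<eta>\<^sub>2 d\<^sub>1 d\<^sub>2"
  define f where "f = (\<lambda>t. fst (x t))"
  define m where "m = (\<lambda>t. snd (x t))"
  have xt: "x t = (f t, m t)" for t by (simp add: f_def m_def)
  define gf where "gf = (\<lambda>t. 1/2 * m t * \<beta> * (1 - (f t + m t)/K) - \<delta> - \<eta>\<^sub>1/(f t + d\<^sub>1))"
  define gm where "gm = (\<lambda>t. 1/2 * f t * \<beta> * (1 - (f t + m t)/K) - \<delta> - \<eta>\<^sub>2/(m t + d\<^sub>2))"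
  have Ff: "fst (F (x t)) = f t * gf t" for t
    unfolding F_def harvest_field_def xt gf_def using pK by (simp add: Let_def field_simps)
  have Fm: "snd (F (x t)) = m t * gm t" for t
    unfolding F_def harvest_field_def xt gm_def using pK by (simp add: Let_def field_simps)
  define D where "D = (\<lambda>t. fst (F (x t)) + snd (F (x t)))"
  have Dt: "D t = (1/2 * f t * m t * \<beta> * (1 - (f t + m t) / K) - \<delta> * f t - \<eta>\<^sub>1 * (f t / (f t + d\<^sub>1)))
       + (1/2 * f t * m t * \<beta> * (1 - (f t + m t) / K) - \<delta> * m t - \<eta>\<^sub>2 * (m t / (m t + d\<^sub>2)))" for t
    unfolding D_def F_def harvest_field_def xt by (simp add: Let_def)
  have dx: "\<forall>t\<ge>0. (x has_vector_derivative F (x t)) (at t within {0..})"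
    using sol unfolding is_solution_def F_def .
  have dff: "(f has_real_derivative fst (F (x t))) (at t within {0..})" if "0 \<le> t" for t
    unfolding f_def by (rule vd_fst) (use dx that in auto)
  have dmm: "(m has_real_derivative snd (F (x t))) (at t within {0..})" if "0 \<le> t" for t
    unfolding m_def by (rule vd_snd) (use dx that in auto)
  have df: "\<forall>t\<ge>0. (f has_real_derivative f t * gf t) (at t within {0..})"
    using dff Ff by auto
  have dm: "\<forall>t\<ge>0. (m has_real_derivative m t * gm t) (at t within {0..})"
    using dmm Fm by auto
  have cf: "continuous_on {0..} f" using cont_from_deriv[OF df] .
  have cm: "continuous_on {0..} m" using cont_from_deriv[OF dm] .
  have cfs: "continuous (at s within {0..}) f" if "0 \<le> s" for s
    using cf that continuous_on_eq_continuous_within by auto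
  have cms: "continuous (at s within {0..}) m" if "0 \<le> s" for s
    using cm that continuous_on_eq_continuous_within by auto
  define h where "h = (\<lambda>t. 1/2 * m t * \<beta> * (1 - (f t + m t)/K))"
  define h2 where "h2 = (\<lambda>t. 1/2 * f t * \<beta> * (1 - (f t + m t)/K))"
  have bdf: "\<forall>s\<ge>0. f s = 0 \<longrightarrow> (\<exists>M. eventually (\<lambda>t. gf t \<le> M) (at s within {0..}))"
  proof (intro allI impI)
    fix s :: real assume s: "0 \<le> s" "f s = 0"
    have chs: "continuous (at s within {0..}) h" unfolding h_def
      by (intro continuous_intros cfs cms s(1)) (use pK in auto)
    have ev1: "eventually (\<lambda>t. h t < h s + 1) (at s within {0..})"
      using chs unfolding continuous_within by (rule order_tendstoD(2)) simp
    have ev2: "eventually (\<lambda>t. f t > - d\<^sub>1) (at s within {0..})"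
      using cfs[OF s(1)] unfolding continuous_within by (rule order_tendstoD(1)) (use s p1 in simp)
    have "eventually (\<lambda>t. gf t \<le> h s + 1) (at s within {0..})"
      using ev1 ev2
    proof eventually_elim
      case (elim t)
      then have "\<eta>\<^sub>1 / (f t + d\<^sub>1) \<ge> 0" using e1 by auto
      moreover have "gf t = h t - \<delta> - \<eta>\<^sub>1 / (f t + d\<^sub>1)" by (simp add: gf_def h_def)
      ultimately show ?case using elim pd by linarith
    qed
    then show "\<exists>M. eventually (\<lambda>t. gf t \<le> M) (at s within {0..})" by blast
  qed
  have bdm: "\<forall>s\<ge>0. m s = 0 \<longrightarrow> (\<exists>M. eventually (\<lambda>t. gm t \<le> M) (at s within {0..}))"
  proof (intro allI impI)
    fix s :: real assume s: "0 \<le> s" "m s = 0"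
    have chs: "continuous (at s within {0..}) h2" unfolding h2_def
      by (intro continuous_intros cfs cms s(1)) (use pK in auto)
    have ev1: "eventually (\<lambda>t. h2 t < h2 s + 1) (at s within {0..})"
      using chs unfolding continuous_within by (rule order_tendstoD(2)) simp
    have ev2: "eventually (\<lambda>t. m t > - d\<^sub>2) (at s within {0..})"
      using cms[OF s(1)] unfolding continuous_within by (rule order_tendstoD(1)) (use s p2 in simp)
    have "eventually (\<lambda>t. gm t \<le> h2 s + 1) (at s within {0..})"
      using ev1 ev2
    proof eventually_elim
      case (elim t)
      then have "\<eta>\<^sub>2 / (m t + d\<^sub>2) \<ge> 0" using e2 by auto
      moreover have "gm t = h2 t - \<delta> - \<eta>\<^sub>2 / (m t + d\<^sub>2)" by (simp add: gm_def h2_def)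
      ultimately show ?case using elim pd by linarith
    qed
    then show "\<exists>M. eventually (\<lambda>t. gm t \<le> M) (at s within {0..})" by blast
  qed
  have r0: "0 \<le> f 0" "0 \<le> m 0" "f 0 + m 0 \<le> K" using x0 unfolding region_def xt by auto
  have fnn: "\<forall>t\<ge>0. f t \<ge> 0" by (rule stay_nonneg[OF df r0(1) bdf])
  have mnn: "\<forall>t\<ge>0. m t \<ge> 0" by (rule stay_nonneg[OF dm r0(2) bdm])
  define V where "V = (\<lambda>t. f t + m t)"
  have dV: "(V has_real_derivative D t) (at t within {0..})" if "0 \<le> t" for t
    unfolding V_def D_def using dff[OF that] dmm[OF that] by (rule DERIV_add)
  have cV: "continuous_on {0..} V" using cont_from_deriv[of V D] dV by auto
  have VK: "\<forall>t\<ge>0. V t \<le> K"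
  proof (intro allI impI, rule ccontr)
    fix t1 :: real assume t1: "0 \<le> t1" "\<not> V t1 \<le> K"
    have c1: "continuous_on {0..t1} V" using cV by (rule continuous_on_subset) auto
    have "V 0 \<le> K" using r0 by (simp add: V_def)
    from last_time[OF t1(1) c1 this] obtain s where s: "s \<in> {0..t1}" "V s \<le> K"
      "\<forall>t. s < t \<and> t \<le> t1 \<longrightarrow> V t > K" by blast
    have "V t1 \<le> V s"
    proof (rule DERIV_nonpos_imp_decreasing_open[of s t1 V])
      show "s \<le> t1" using s by simp
      show "continuous_on {s..t1} V" using cV s by (auto intro: continuous_on_subset)
      fix y assume y: "s < y" "y < t1"
      have y0: "0 < y" using y s by auto
      have "V y > K" using s y by auto
      then have "D y \<le> - \<delta> * (f y + m y)"
        unfolding Dt using big_ineq[OF pb pd pK p1 p2 e1 e2, of "f y" "m y"] fnn mnn y0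
        by (auto simp: V_def)
      moreover have "- \<delta> * (f y + m y) \<le> 0" using fnn mnn y0 pd by auto
      moreover have "(V has_real_derivative D y) (at y)" using deriv_interior dV y0 by auto
      ultimately show "\<exists>z. (V has_real_derivative z) (at y) \<and> z \<le> 0" by auto
    qed
    then show False using s t1 by auto
  qed
  define c where "c = 3/4 * \<delta>"
  have Dle: "D y \<le> - c * V y" if "0 \<le> y" for y
    unfolding Dt c_def V_def
    using key_ineq[OF pb pd pK p1 p2 e1 e2 cond, of "f y" "m y"] fnn mnn VK that
    by (auto simp: V_def)
  have Vdec: "V t \<le> V 0 * exp (- c * t)" if t: "0 \<le> t" for t
  proof (cases "t = 0")
    case True then show ?thesis by simp
  next
    case False
    define W where "W = (\<lambda>t. V t * exp (c * t))"
    have "W t \<le> W 0"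
    proof (rule DERIV_nonpos_imp_decreasing_open[of 0 t W])
      show "0 \<le> t" using t by simp
      show "continuous_on {0..t} W" unfolding W_def
        by (intro continuous_intros continuous_on_subset[OF cV]) auto
      fix y assume y: "0 < y" "y < t"
      have dVy: "(V has_real_derivative D y) (at y)" using deriv_interior dV y by auto
      have "(W has_real_derivative (D y * exp (c * y) + V y * (exp (c * y) * c))) (at y)"
        unfolding W_def by (rule derivative_eq_intros dVy refl | simp)+
      moreover have "D y * exp (c * y) + V y * (exp (c * y) * c) = (D y + c * V y) * exp (c * y)"
        by (simp add: algebra_simps)
      moreover have "(D y + c * V y) * exp (c * y) \<le> 0"
        using Dle[of y] y by (intro mult_nonpos_nonneg) auto
      ultimately show "\<exists>z. (W has_real_derivative z) (at y) \<and> z \<le> 0" by auto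
    qed
    then have "V t * exp (c * t) \<le> V 0" by (simp add: W_def)
    then have "V t * exp (c * t) * exp (- c * t) \<le> V 0 * exp (- c * t)"
      by (intro mult_right_mono) auto
    moreover have "V t * exp (c * t) * exp (- c * t) = V t"
    proof -
      have "exp (c * t) * exp (- c * t) = 1" by (simp add: exp_minus)
      then show ?thesis by (simp add: mult.assoc)
    qed
    ultimately show ?thesis by linarith
  qed
  show ?thesis
  proof (intro allI impI)
    fix t :: real assume t: "0 \<le> t"
    have "norm (x t) \<le> norm (f t) + norm (m t)" unfolding xt by (rule norm_Pair_le)
    also have "\<dots> = V t" using fnn mnn t by (simp add: V_def)
    also have "\<dots> \<le> V 0 * exp (- c * t)" using Vdec t by simp
    finally show "norm (x t) \<le> (fst (x 0) + snd (x 0)) * exp (-(3/4*\<delta>) * t)"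
      by (simp add: V_def f_def m_def c_def)
  qed
qed

lemma norm_fst_pair: "norm (fst (z :: real \<times> real)) \<le> norm z"
  by (metis norm_fst_le prod.collapse)

lemma norm_snd_pair: "norm (snd (z :: real \<times> real)) \<le> norm z"
  by (metis norm_snd_le prod.collapse)

lemma dist_zero_pair: "dist (z :: real \<times> real) (0, 0) = norm z"
  by (simp add: dist_norm flip: zero_prod_def)

theorem mainTheorem16:
  fixes \<beta> \<delta> K d\<^sub>1 d\<^sub>2 \<eta>\<^sub>1 \<eta>\<^sub>2 :: real
  assumes "0 < \<beta>" "\<beta> < 1" "0 < \<delta>" "\<delta> < 1" "0 < K" "0 < d\<^sub>1" "0 < d\<^sub>2"
    and "0 \<le> \<eta>\<^sub>1" "0 \<le> \<eta>\<^sub>2"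
    and "\<beta> * K < 2 * \<delta> + \<eta>\<^sub>1 / (K + d\<^sub>1) + \<eta>\<^sub>2 / (K + d\<^sub>2)"
  shows "globally_asymptotically_stable (harvest_field \<beta> \<delta> K \<eta>\<^sub>1 \<eta>\<^sub>2 d\<^sub>1 d\<^sub>2) (region K) (0, 0)"
proof -
  define F where "F = harvest_field \<beta> \<delta> K \<eta>\<^sub>1 \<eta>\<^sub>2 d\<^sub>1 d\<^sub>2"
  define c where "c = 3/4 * \<delta>"
  have c: "c > 0" using assms by (simp add: c_def)
  have B: "\<forall>t\<ge>0. norm (x t) \<le> (fst (x 0) + snd (x 0)) * exp (- c * t)"
    if "is_solution F x" "x 0 \<in> region K" for x
    using sol_bound[OF assms(1,3,5,6,7,8,9,10)] that by (simp add: F_def c_def)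
  have V0: "0 \<le> fst (x 0) + snd (x 0)" "fst (x 0) + snd (x 0) \<le> 2 * norm (x 0)"
    if "x 0 \<in> region K" for x :: "real \<Rightarrow> real \<times> real"
  proof -
    have "0 \<le> fst (x 0)" "0 \<le> snd (x 0)" using that by (auto simp: region_def case_prod_beta)
    moreover have "norm (fst (x 0)) \<le> norm (x 0)" "norm (snd (x 0)) \<le> norm (x 0)"
      by (rule norm_fst_pair, rule norm_snd_pair)
    ultimately show "0 \<le> fst (x 0) + snd (x 0)" "fst (x 0) + snd (x 0) \<le> 2 * norm (x 0)" by auto
  qed
  have P1: "F (0, 0) = 0" by (simp add: F_def harvest_field_def zero_prod_def)
  have P2: "\<forall>\<epsilon>>0. \<exists>\<delta>'>0. \<forall>x. is_solution F x \<and> x 0 \<in> region K \<and> dist (x 0) (0, 0) < \<delta>' \<longrightarrow>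
        (\<forall>t\<ge>0. dist (x t) (0, 0) < \<epsilon>)"
  proof (intro allI impI)
    fix \<epsilon> :: real assume e: "\<epsilon> > 0"
    show "\<exists>\<delta>'>0. \<forall>x. is_solution F x \<and> x 0 \<in> region K \<and> dist (x 0) (0, 0) < \<delta>' \<longrightarrow>
        (\<forall>t\<ge>0. dist (x t) (0, 0) < \<epsilon>)"
    proof (intro exI[of _ "\<epsilon>/2"] conjI allI impI)
      show "\<epsilon>/2 > 0" using e by simp
      fix x :: "real \<Rightarrow> real \<times> real" and t :: real
      assume x: "is_solution F x \<and> x 0 \<in> region K \<and> dist (x 0) (0, 0) < \<epsilon>/2" and t: "0 \<le> t"
      have "exp (- c * t) \<le> 1" using c t by simp
      then have "(fst (x 0) + snd (x 0)) * exp (- c * t) \<le> fst (x 0) + snd (x 0)"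
        using V0(1)[of x] x by (intro mult_left_le) auto
      then have "norm (x t) \<le> 2 * norm (x 0)" using B[of x] x t V0(2)[of x] by force
      then show "dist (x t) (0, 0) < \<epsilon>" using x by (simp add: dist_zero_pair)
    qed
  qed
  have P3: "\<forall>x. is_solution F x \<and> x 0 \<in> region K \<longrightarrow> (x \<longlongrightarrow> (0, 0)) at_top"
  proof (intro allI impI)
    fix x :: "real \<Rightarrow> real \<times> real" assume x: "is_solution F x \<and> x 0 \<in> region K"
    have "(x \<longlongrightarrow> 0) at_top"
    proof (rule Lim_null_comparison)
      show "eventually (\<lambda>t. norm (x t) \<le> (fst (x 0) + snd (x 0)) * exp (- c * t)) at_top"
        using eventually_ge_at_top[of 0] by eventually_elim (use B[of x] x in auto)
      show "((\<lambda>t. (fst (x 0) + snd (x 0)) * exp (- c * t)) \<longlongrightarrow> 0) at_top"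
        using tendsto_mult_right_zero[OF exp_decay[OF c]] by simp
    qed
    then show "(x \<longlongrightarrow> (0, 0)) at_top" by (simp add: zero_prod_def)
  qed
  show ?thesis unfolding globally_asymptotically_stable_def F_def[symmetric]
    using P1 P2 P3 by blast
qed

end
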